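(* Let $n=p^2q^2$ with primes $3\le p<q$, and let $\mathcal{D}_{S_1},\mathcal{D}_{S_2}\subseteq\mathcal{D}_{[n]}\setminus\{n\}$ with $1\in\mathcal{D}_{S_1}\cap\mathcal{D}_{S_2}$. If $\mathrm{Spec}(\mathrm{ICG}(n,\mathcal{D}_{S_1}))=\mathrm{Spec}(\mathrm{ICG}(n,\mathcal{D}_{S_2}))$, then $\mathcal{D}_{S_1}=\mathcal{D}_{S_2}$.
   Context: Identify $\mathbb{Z}_n$ with $[n]=\{1,\dots,n\}$. For a divisor $d$ of $n$, $G_n(d)=\{j\in[n]:\gcd(j,n)=d\}$; $\mathcal{D}_{[n]}$ is the set of positive divisors of $n$. For $\mathcal{D}\subseteq\mathcal{D}_{[n]}\setminus\{n\}$, $\mathrm{ICG}(n,\mathcal{D})=\mathrm{Cay}(\mathbb{Z}_n,S)$ with $S=\bigcup_{d\in\mathcal{D}}G_n(d)$, and $\mathcal{D}=\mathcal{D}_S$. $\mathrm{Spec}$ is the multiset of adjacency eigenvalues. *)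

theory Defs
  imports "Jordan_Normal_Form.Char_Poly" "HOL-Library.Multiset"
begin

text \<open>Z_n identified with [n] = {1..n}; the element n plays the role of 0.\<close>

definition Gn :: "nat \<Rightarrow> nat \<Rightarrow> nat set" where
  "Gn n d = {j \<in> {1..n}. gcd j n = d}"

definition divisors_of :: "nat \<Rightarrow> nat set" where
  "divisors_of n = {d. 0 < d \<and> d dvd n}"

definition ICG_conn :: "nat \<Rightarrow> nat set \<Rightarrow> nat set" where
  "ICG_conn n D = (\<Union>d\<in>D. Gn n d)"

definition cay_adj :: "nat \<Rightarrow> nat set \<Rightarrow> complex mat" where
  "cay_adj n S = mat n n (\<lambda>(i, j). if (\<exists>s\<in>S. s mod n = (j + n - i) mod n) then 1 else 0)"

definition ICG_adj :: "nat \<Rightarrow> nat set \<Rightarrow> complex mat" where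
  "ICG_adj n D = cay_adj n (ICG_conn n D)"

definition Spec :: "complex mat \<Rightarrow> complex multiset" where
  "Spec A = Abs_multiset (\<lambda>x. order x (char_poly A))"

end

theory Submission
  imports Defs "HOL-Computational_Algebra.Primes"
begin

definition rt :: "nat \<Rightarrow> int \<Rightarrow> complex" where
  "rt n t = cis (2 * pi * of_int t / of_nat n)"

lemma rt_add: "rt n (a + b) = rt n a * rt n b"
  unfolding rt_def by (simp add: cis_mult add_divide_distrib algebra_simps)

lemma rt_zero[simp]: "rt n 0 = 1" by (simp add: rt_def)

lemma rt_period: assumes "n > 0" shows "rt n (a + int n * k) = rt n a"
proof -
  have "cis (2 * pi * real_of_int k) = 1" by (rule cis_multiple_2pi) simp
  then have "rt n (int n * k) = 1"
    unfolding rt_def using assms by (simp add: mult.assoc)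
  then show ?thesis by (simp add: rt_add)
qed

lemma rt_mod: assumes "n > 0" shows "rt n (a mod int n) = rt n a"
proof -
  have "a = a mod int n + int n * (a div int n)" by simp
  then show ?thesis using rt_period[OF assms, of "a mod int n" "a div int n"] by metis
qed

lemma rt_ne1: assumes "n > 0" "\<not> int n dvd t" shows "rt n t \<noteq> 1"
proof
  assume "rt n t = 1"
  then have "cos (2 * pi * of_int t / of_nat n) = 1"
    unfolding rt_def by (metis Re_complex_of_real complex_Re_numeral cis.sel(1) one_complex.sel(1))
  then obtain k :: int where k: "2 * pi * of_int t / of_nat n = real_of_int k * 2 * pi"
    using cos_one_2pi_int by blast
  then have "real_of_int t = real_of_int k * real n" using assms(1)
    by (simp add: field_simps)
  then have "t = k * int n" by (metis of_int_eq_iff of_int_mult of_int_of_nat_eq)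
  then show False using assms(2) by simp
qed

lemma rt_pow: "rt n t ^ k = rt n (t * int k)"
proof (induction k)
  case (Suc k)
  then show ?case by (simp add: rt_add[symmetric] algebra_simps)
qed simp

lemma geo_zero: fixes z :: complex assumes "z ^ N = 1" "z \<noteq> 1"
  shows "(\<Sum>i<N. z ^ i) = 0"
  using assms by (simp add: geometric_sum)

lemma rt_sum: assumes "n > 0"
  shows "(\<Sum>k<n. rt n (t * int k)) = (if int n dvd t then of_nat n else 0)"
proof (cases "int n dvd t")
  case True
  then obtain c where t: "t = int n * c" by blast
  have "rt n (t * int k) = 1" for k
    using rt_period[OF assms, of 0 "c * int k"] by (simp add: t algebra_simps)
  then show ?thesis using True by simp
next
  case False
  have "(\<Sum>k<n. rt n (t * int k)) = (\<Sum>k<n. rt n t ^ k)" by (simp add: rt_pow)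
  also have "\<dots> = 0"
  proof (rule geo_zero)
    show "rt n t ^ n = 1" using rt_pow rt_period[OF assms, of 0 t] by (simp add: mult.commute)
    show "rt n t \<noteq> 1" using rt_ne1[OF assms False] .
  qed
  finally show ?thesis using False by simp
qed

lemma rt_cong: assumes "n > 0" "a mod n = b mod n"
  shows "rt n (int a * t) = rt n (int b * t)"
proof -
  have "(int a * t) mod int n = (int b * t) mod int n"
    by (metis assms(2) mod_mult_left_eq of_nat_mod)
  then show ?thesis using rt_mod[OF assms(1)] by metis
qed

lemma order_prod_lin: fixes L :: "complex list" shows "order x (prod_list (map (\<lambda>a. [:-a, 1:]) L)) = count (mset L) x"
proof (induction L)
  case Nil
  then show ?case by (simp add: order_0I)
next
  case (Cons a L)
  have nz: "prod_list (map (\<lambda>a. [:-a, 1:]) L) \<noteq> (0 :: complex poly)"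
    by (simp add: prod_list_zero_iff image_iff)
  have lz: "[:-a, 1:] \<noteq> (0 :: complex poly)" by simp
  have "[:-a, 1:] * prod_list (map (\<lambda>a. [:-a, 1:]) L) \<noteq> 0"
    using nz lz by (metis mult_eq_0_iff)
  then have "order x ([:-a, 1:] * prod_list (map (\<lambda>a. [:-a, 1:]) L))
     = order x [:-a, 1:] + order x (prod_list (map (\<lambda>a. [:-a, 1:]) L))"
    by (rule order_mult)
  also have "\<dots> = (if a = x then 1 else 0) + count (mset L) x"
    using Cons.IH by (simp add: order_linear')
  finally show ?case by (simp only: list.map prod_list.Cons) simp
qed

lemma circ_spec:
  fixes c :: "nat \<Rightarrow> complex"
  assumes n: "n > 0"
  shows "Spec (mat n n (\<lambda>(i,j). c ((j + n - i) mod n)))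
       = mset (map (\<lambda>j. \<Sum>m<n. c m * rt n (int j * int m)) [0..<n])"
proof -
  define A where "A = mat n n (\<lambda>(i,j). c ((j + n - i) mod n))"
  define ev where "ev j = (\<Sum>m<n. c m * rt n (int j * int m))" for j
  define F where "F = mat n n (\<lambda>(i,j). rt n (int i * int j))"
  define G where "G = mat n n (\<lambda>(i,j). rt n (- (int i * int j)) / of_nat n)"
  define Dg where "Dg = mat n n (\<lambda>(i,j). if i = j then ev i else 0)"
  have cA: "A \<in> carrier_mat n n" and cF: "F \<in> carrier_mat n n" and cG: "G \<in> carrier_mat n n"
    and cD: "Dg \<in> carrier_mat n n" by (auto simp: A_def F_def G_def Dg_def)
  have FG: "F * G = 1\<^sub>m n"
  proof (rule eq_matI)
    fix i j assume ij: "i < dim_row (1\<^sub>m n)" "j < dim_col (1\<^sub>m n)"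
    then have i: "i < n" and j: "j < n" by auto
    have "(F * G) $$ (i, j) = (\<Sum>k\<in>{0..<n}. rt n (int i * int k) * (rt n (- (int k * int j)) / of_nat n))"
      using i j by (simp add: F_def G_def scalar_prod_def)
    also have "\<dots> = (\<Sum>k<n. rt n ((int i - int j) * int k)) / of_nat n"
      by (simp add: sum_divide_distrib lessThan_atLeast0 rt_add[symmetric] algebra_simps)
    also have "\<dots> = (if i = j then 1 else 0)"
    proof (cases "i = j")
      case True then show ?thesis using n by (simp add: rt_sum[OF n])
    next
      case False
      have "\<not> int n dvd (int i - int j)"
      proof
        assume "int n dvd (int i - int j)"
        moreover have "int i - int j \<noteq> 0" using False by simp
        ultimately have "\<bar>int n\<bar> \<le> \<bar>int i - int j\<bar>"
          by (metis dvd_imp_le_int)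
        then show False using i j False by auto
      qed
      then show ?thesis using False by (simp add: rt_sum[OF n])
    qed
    finally show "(F * G) $$ (i, j) = 1\<^sub>m n $$ (i, j)" using i j by simp
  qed (simp_all add: F_def G_def)
  have GF: "G * F = 1\<^sub>m n" by (rule mat_mult_left_right_inverse[OF cF cG FG])
  have AF: "A * F = F * Dg"
  proof (rule eq_matI)
    fix i j assume "i < dim_row (F * Dg)" "j < dim_col (F * Dg)"
    then have i: "i < n" and j: "j < n" by (auto simp: F_def Dg_def)
    have "(A * F) $$ (i, j) = (\<Sum>k\<in>{0..<n}. c ((k + n - i) mod n) * rt n (int k * int j))"
      using i j by (simp add: A_def F_def scalar_prod_def)
    also have "\<dots> = (\<Sum>m\<in>{0..<n}. c m * rt n (int ((m + i) mod n) * int j))"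
    proof (rule sum.reindex_bij_witness[where i = "\<lambda>m. (m + i) mod n" and j = "\<lambda>k. (k + n - i) mod n"])
      fix a assume a: "a \<in> {0..<n}"
      show "((a + n - i) mod n + i) mod n = a"
      proof -
        have "((a + n - i) mod n + i) mod n = (a + n - i + i) mod n" by (simp add: mod_add_left_eq)
        also have "\<dots> = (a + n) mod n" using i by simp
        also have "\<dots> = a" using a by simp
        finally show ?thesis .
      qed
      show "(a + n - i) mod n \<in> {0..<n}" using n by simp
      show "c ((a + n - i) mod n) * rt n (int (((a + n - i) mod n + i) mod n) * int j) =
            c ((a + n - i) mod n) * rt n (int a * int j)"
        using \<open>((a + n - i) mod n + i) mod n = a\<close> by simp
    next
      fix b assume b: "b \<in> {0..<n}"
      show "((b + i) mod n + n - i) mod n = b"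
      proof -
        have "((b + i) mod n + n - i) mod n = ((b + i) mod n + (n - i)) mod n" using i by simp
        also have "\<dots> = (b + i + (n - i)) mod n" by (simp add: mod_add_left_eq)
        also have "\<dots> = (b + n) mod n" using i by simp
        also have "\<dots> = b" using b by simp
        finally show ?thesis .
      qed
      show "(b + i) mod n \<in> {0..<n}" using n by simp
    qed
    also have "\<dots> = (\<Sum>m\<in>{0..<n}. c m * (rt n (int i * int j) * rt n (int j * int m)))"
    proof (rule sum.cong[OF refl])
      fix m assume "m \<in> {0..<n}"
      have "rt n (int ((m + i) mod n) * int j) = rt n (int (m + i) * int j)"
        by (rule rt_cong[OF n]) simp
      also have "\<dots> = rt n (int i * int j) * rt n (int j * int m)"
        by (simp add: rt_add[symmetric] algebra_simps)
      finally show "c m * rt n (int ((m + i) mod n) * int j) = c m * (rt n (int i * int j) * rt n (int j * int m))"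
        by simp
    qed
    also have "\<dots> = rt n (int i * int j) * ev j"
      by (simp add: ev_def sum_distrib_left lessThan_atLeast0 algebra_simps)
    also have "\<dots> = (F * Dg) $$ (i, j)"
    proof -
      have "(F * Dg) $$ (i, j) = (\<Sum>k\<in>{0..<n}. rt n (int i * int k) * (if k = j then ev k else 0))"
        using i j by (simp add: F_def Dg_def scalar_prod_def)
      also have "\<dots> = rt n (int i * int j) * ev j"
        using j by (simp add: if_distrib sum.delta' cong: if_cong)
      finally show ?thesis by simp
    qed
    finally show "(A * F) $$ (i, j) = (F * Dg) $$ (i, j)" .
  qed (auto simp: A_def F_def Dg_def)
  have AFDG: "A = F * Dg * G"
  proof -
    have "A = A * (F * G)" using cA by (simp add: FG)
    also have "\<dots> = (A * F) * G" using cA cF cG by (simp add: assoc_mult_mat)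
    finally show ?thesis using AF by simp
  qed
  have sim: "similar_mat A Dg"
    unfolding similar_mat_def
    by (rule exI[of _ F], rule exI[of _ G], rule similar_mat_witI[OF FG GF AFDG cA cD cF cG])
  have ut: "upper_triangular Dg" by (auto simp: upper_triangular_def Dg_def)
  have "char_poly A = char_poly Dg" by (rule char_poly_similar[OF sim])
  also have "\<dots> = (\<Prod>a\<leftarrow>diag_mat Dg. [:- a, 1:])" by (rule char_poly_upper_triangular[OF cD ut])
  also have "diag_mat Dg = map ev [0..<n]"
    by (rule nth_equalityI) (auto simp: diag_mat_def Dg_def)
  finally have cp: "char_poly A = (\<Prod>a\<leftarrow>map ev [0..<n]. [:- a, 1:])" .
  have "Spec A = Abs_multiset (count (mset (map ev [0..<n])))"
    unfolding Spec_def cp using order_prod_lin[of _ "map ev [0..<n]"] by (simp add: map_map comp_def)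
  also have "\<dots> = mset (map ev [0..<n])" by (simp add: count_inverse)
  finally show ?thesis unfolding A_def ev_def .
qed

definition al :: "nat \<Rightarrow> nat \<Rightarrow> nat" where
  "al p m = (if p^2 dvd m then 2 else if p dvd m then 1 else 0)"

lemma al_le: "al p m \<le> 2" by (simp add: al_def)

lemma pow_dvd_al: assumes "i \<le> 2" shows "p^i dvd m \<longleftrightarrow> i \<le> al p m"
proof -
  have "p^2 dvd m \<Longrightarrow> p dvd m" by (metis dvd_mult_left power2_eq_square)
  then show ?thesis using assms
    by (cases i; cases "i - 1"; auto simp: al_def power2_eq_square)
qed

lemma coprime_pows: fixes p q :: nat assumes "prime p" "prime q" "p \<noteq> q" shows "coprime (p^i) (q^k)"
proof -
  have "coprime p q" using assms primes_coprime by blast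
  then show ?thesis by simp
qed

lemma pq_dvd_iff: fixes p q :: nat assumes "prime p" "prime q" "p \<noteq> q"
  shows "p^i * q^k dvd m \<longleftrightarrow> p^i dvd m \<and> q^k dvd m"
  using coprime_pows[OF assms] by (meson divides_mult dvd_mult_left dvd_mult_right)

lemma divisors_pq: fixes p q d :: nat assumes "prime p" "prime q" "d dvd p^2 * q^2"
  shows "\<exists>i\<le>2. \<exists>k\<le>2. d = p^i * q^k"
proof -
  obtain a b where "d = a * b" "a dvd p^2" "b dvd q^2" using division_decomp[OF assms(3)] by blast
  then show ?thesis using divides_primepow_nat[OF assms(1)] divides_primepow_nat[OF assms(2)] by metis
qed

lemma gcd_pq: fixes p q m :: nat assumes p: "prime p" and q: "prime q" and pq: "p \<noteq> q"
  shows "gcd m (p^2 * q^2) = p^(al p m) * q^(al q m)"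
proof -
  define g where "g = gcd m (p^2 * q^2)"
  obtain i k where ik: "i \<le> 2" "k \<le> 2" "g = p^i * q^k"
    using divisors_pq[OF p q, of g] unfolding g_def by auto
  have gm: "g dvd m" and gn: "g dvd p^2 * q^2" unfolding g_def by auto
  have pi: "p^i dvd m" and qk: "q^k dvd m" using gm ik pq_dvd_iff[OF p q pq] by auto
  have p0: "p > 1" "q > 1" using p q prime_gt_1_nat by auto
  have i1: "i = al p m"
  proof (rule ccontr)
    assume ne: "i \<noteq> al p m"
    have "i \<le> al p m" using pi pow_dvd_al ik by auto
    with ne have "Suc i \<le> al p m" by simp
    then have "p^(Suc i) dvd m" using pow_dvd_al al_le by (metis order.trans)
    then have "p^(Suc i) * q^k dvd m" using qk pq_dvd_iff[OF p q pq, of "Suc i" k m] by blast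
    moreover have "p^(Suc i) * q^k dvd p^2 * q^2"
    proof (rule mult_dvd_mono)
      show "p^(Suc i) dvd p^2" by (rule le_imp_power_dvd) (use \<open>Suc i \<le> al p m\<close> al_le[of p m] in linarith)
      show "q^k dvd q^2" by (rule le_imp_power_dvd) (use ik in linarith)
    qed
    ultimately have "p^(Suc i) * q^k dvd g" unfolding g_def by simp
    then have "(p^i * q^k) * p dvd (p^i * q^k) * 1" using ik by (simp add: algebra_simps)
    then have "p dvd 1" using p0 by (simp only: nat_mult_dvd_cancel_disj) simp
    then show False using p0 by simp
  qed
  have k1: "k = al q m"
  proof (rule ccontr)
    assume ne: "k \<noteq> al q m"
    have "k \<le> al q m" using qk pow_dvd_al ik by auto
    with ne have "Suc k \<le> al q m" by simp
    then have "q^(Suc k) dvd m" using pow_dvd_al al_le by (metis order.trans)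
    then have "p^i * q^(Suc k) dvd m" using pi pq_dvd_iff[OF p q pq, of i "Suc k" m] by blast
    moreover have "p^i * q^(Suc k) dvd p^2 * q^2"
    proof (rule mult_dvd_mono)
      show "q^(Suc k) dvd q^2" by (rule le_imp_power_dvd) (use \<open>Suc k \<le> al q m\<close> al_le[of q m] in linarith)
      show "p^i dvd p^2" by (rule le_imp_power_dvd) (use ik in linarith)
    qed
    ultimately have "p^i * q^(Suc k) dvd g" unfolding g_def by simp
    then have "(p^i * q^k) * q dvd (p^i * q^k) * 1" using ik by (simp add: algebra_simps)
    then have "q dvd 1" using p0 by (simp only: nat_mult_dvd_cancel_disj) simp
    then show False using p0 by simp
  qed
  show ?thesis using ik i1 k1 unfolding g_def by simp
qed

lemma rt_scale: assumes "e > 0" shows "rt (e * N) (int e * t) = rt N t"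
  unfolding rt_def using assms by (simp add: field_simps)

lemma fourier_sub: assumes "e * N = n" "n > 0"
  shows "(\<Sum>m<n. if e dvd m then rt n (int j * int m) else 0) = (if N dvd j then of_nat N else 0)"
proof -
  have e: "e > 0" and N: "N > 0" using assms by auto
  have "(\<Sum>m<n. if e dvd m then rt n (int j * int m) else 0) = (\<Sum>m\<in>{m. m < n \<and> e dvd m}. rt n (int j * int m))"
    by (simp add: sum.inter_filter[symmetric] lessThan_def)
  also have "{m. m < n \<and> e dvd m} = (\<lambda>t. e * t) ` {..<N}"
  proof -
    have "m \<in> (\<lambda>t. e * t) ` {..<N}" if h: "m < n" "e dvd m" for m
    proof -
      obtain t where t: "m = e * t" using h(2) by (auto elim: dvdE)
      then have "e * t < e * N" using h assms by simp
      then have "t < N" by simp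
      then show ?thesis using t by auto
    qed
    moreover have "e * t < n" if "t < N" for t using that assms(1) e by (metis mult_less_mono2)
    ultimately show ?thesis by auto
  qed
  also have "(\<Sum>m\<in>(\<lambda>t. e * t) ` {..<N}. rt n (int j * int m)) = (\<Sum>t<N. rt n (int j * int (e * t)))"
    by (subst sum.reindex) (use e in \<open>auto simp: inj_on_def\<close>)
  also have "\<dots> = (\<Sum>t<N. rt N (int j * int t))"
  proof (rule sum.cong[OF refl])
    fix t
    have "rt n (int j * int (e * t)) = rt (e * N) (int e * (int j * int t))"
      using assms by (simp add: algebra_simps)
    also have "\<dots> = rt N (int j * int t)" by (rule rt_scale[OF e])
    finally show "rt n (int j * int (e * t)) = rt N (int j * int t)" .
  qed
  also have "\<dots> = (if int N dvd int j then of_nat N else 0)" by (rule rt_sum[OF N])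
  finally show ?thesis by simp
qed

definition xb :: "nat \<Rightarrow> nat \<Rightarrow> nat set \<Rightarrow> nat \<Rightarrow> nat \<Rightarrow> int" where
  "xb p q D i k = (if p^(2-i) * q^(2-k) \<in> D then 1 else 0)"

definition yb :: "nat \<Rightarrow> nat \<Rightarrow> nat set \<Rightarrow> nat \<Rightarrow> nat \<Rightarrow> int" where
  "yb p q D i k = xb p q D i k - (if i < 2 then xb p q D (Suc i) k else 0)
     - (if k < 2 then xb p q D i (Suc k) else 0) + (if i < 2 \<and> k < 2 then xb p q D (Suc i) (Suc k) else 0)"

definition Lam :: "nat \<Rightarrow> nat \<Rightarrow> nat set \<Rightarrow> nat \<Rightarrow> nat \<Rightarrow> int" where
  "Lam p q D A B = (\<Sum>i<3. \<Sum>k<3. if i \<le> A \<and> k \<le> B then yb p q D i k * int p ^ i * int q ^ k else 0)"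

lemma sum3: "(\<Sum>i<3. f i) = f 0 + f 1 + f (2::nat)"
  by (simp add: numeral_3_eq_3 eval_nat_numeral)

lemma indicator_expand: assumes "A \<le> 2" "B \<le> 2"
  shows "xb p q D (2-A) (2-B) = (\<Sum>i<3. \<Sum>k<3. if 2-A \<le> i \<and> 2-B \<le> k then yb p q D i k else 0)"
proof -
  have "A = 0 \<or> A = 1 \<or> A = 2" "B = 0 \<or> B = 1 \<or> B = 2" using assms by auto
  then show ?thesis unfolding sum3 yb_def by (elim disjE) (simp_all add: eval_nat_numeral)
qed

lemma conn_iff: assumes "D \<subseteq> divisors_of n - {n}" "m < n"
  shows "(\<exists>s\<in>ICG_conn n D. s mod n = m) \<longleftrightarrow> gcd m n \<in> D"
proof
  assume "\<exists>s\<in>ICG_conn n D. s mod n = m"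
  then obtain s where s: "s \<in> ICG_conn n D" "s mod n = m" by blast
  then have "gcd s n \<in> D" by (auto simp: ICG_conn_def Gn_def)
  moreover have "gcd m n = gcd s n" using s(2) by (metis gcd.commute gcd_mod_right mod_less_divisor assms(2) gr_zeroI not_less0)
  ultimately show "gcd m n \<in> D" by simp
next
  assume g: "gcd m n \<in> D"
  have "m \<noteq> 0" using g assms(1) by auto
  then have "m \<in> Gn n (gcd m n)" using assms(2) by (auto simp: Gn_def)
  then have "m \<in> ICG_conn n D" using g by (auto simp: ICG_conn_def)
  then show "\<exists>s\<in>ICG_conn n D. s mod n = m" using assms(2) by force
qed

lemma ICG_ev:
  fixes p q n :: nat
  assumes p: "prime p" and q: "prime q" and pq: "p \<noteq> q" and n: "n = p^2 * q^2"
    and D: "D \<subseteq> divisors_of n - {n}" and j: "j < n"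
  shows "(\<Sum>m<n. (if \<exists>s\<in>ICG_conn n D. s mod n = m then 1 else 0) * rt n (int j * int m)) = (of_int (Lam p q D (al p j) (al q j)) :: complex)"
proof -
  have n0: "n > 0" using n p q prime_gt_0_nat by simp
  define c :: "nat \<Rightarrow> complex" where "c m = (if \<exists>s\<in>ICG_conn n D. s mod n = m then 1 else 0)" for m
    have cm: "c m = of_int (\<Sum>i<3. \<Sum>k<3. if p^(2-i) * q^(2-k) dvd m then yb p q D i k else 0)"
      if m: "m < n" for m
    proof -
      have "c m = (if gcd m n \<in> D then 1 else 0)" unfolding c_def using conn_iff[OF D m] by simp
      also have "gcd m n = p^(al p m) * q^(al q m)" using gcd_pq[OF p q pq] n by simp
      also have "(if p^(al p m) * q^(al q m) \<in> D then 1 else 0) = of_int (xb p q D (2 - al p m) (2 - al q m))"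
        using al_le[of p m] al_le[of q m] by (simp add: xb_def)
      also have "xb p q D (2 - al p m) (2 - al q m) = (\<Sum>i<3. \<Sum>k<3. if 2 - al p m \<le> i \<and> 2 - al q m \<le> k then yb p q D i k else 0)"
        by (rule indicator_expand[OF al_le al_le])
      also have "\<dots> = (\<Sum>i<3. \<Sum>k<3. if p^(2-i) * q^(2-k) dvd m then yb p q D i k else 0)"
      proof (intro sum.cong refl)
        fix i k assume "i \<in> {..<3::nat}" "k \<in> {..<3::nat}"
        then have ik: "i \<le> 2" "k \<le> 2" by auto
        have "p^(2-i) * q^(2-k) dvd m \<longleftrightarrow> 2 - i \<le> al p m \<and> 2 - k \<le> al q m"
          using pq_dvd_iff[OF p q pq] pow_dvd_al[of "2-i" p m] pow_dvd_al[of "2-k" q m] by simp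
        also have "\<dots> \<longleftrightarrow> 2 - al p m \<le> i \<and> 2 - al q m \<le> k" using ik al_le[of p m] al_le[of q m] by auto
        finally show "(if 2 - al p m \<le> i \<and> 2 - al q m \<le> k then yb p q D i k else 0) =
            (if p^(2-i) * q^(2-k) dvd m then yb p q D i k else 0)" by simp
      qed
      finally show ?thesis .
    qed
    have "(\<Sum>m<n. c m * rt n (int j * int m))
        = (\<Sum>m<n. \<Sum>i<3. \<Sum>k<3. of_int (yb p q D i k) * (if p^(2-i) * q^(2-k) dvd m then rt n (int j * int m) else 0))"
      by (intro sum.cong refl) (auto simp: cm sum_distrib_right intro!: sum.cong)
    also have "\<dots> = (\<Sum>i<3. \<Sum>k<3. of_int (yb p q D i k) * (\<Sum>m<n. if p^(2-i) * q^(2-k) dvd m then rt n (int j * int m) else 0))"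
      by (simp add: sum.swap[of _ "{..<n}"] sum_distrib_left)
    also have "\<dots> = (\<Sum>i<3. \<Sum>k<3. of_int (yb p q D i k) * (if p^i * q^k dvd j then of_nat (p^i * q^k) else 0))"
    proof (intro sum.cong refl)
      fix i k assume "i \<in> {..<3::nat}" "k \<in> {..<3::nat}"
      then have ik: "i \<le> 2" "k \<le> 2" by auto
      have "p^(2-i) * p^i = p^2" "q^(2-k) * q^k = q^2" using ik by (simp_all add: power_add[symmetric])
      then have "p^(2-i) * q^(2-k) * (p^i * q^k) = n"
        using n by (metis mult.assoc mult.left_commute)
      then show "of_int (yb p q D i k) * (\<Sum>m<n. if p^(2-i) * q^(2-k) dvd m then rt n (int j * int m) else 0) =
          of_int (yb p q D i k) * (if p^i * q^k dvd j then of_nat (p^i * q^k) else 0)"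
        using fourier_sub[OF _ n0] by simp
    qed
    also have "\<dots> = of_int (Lam p q D (al p j) (al q j))"
      unfolding Lam_def of_int_sum
    proof (intro sum.cong refl)
      fix i k assume "i \<in> {..<3::nat}" "k \<in> {..<3::nat}"
      then have ik: "i \<le> 2" "k \<le> 2" by auto
      have "p^i * q^k dvd j \<longleftrightarrow> i \<le> al p j \<and> k \<le> al q j"
        using pq_dvd_iff[OF p q pq] pow_dvd_al[OF ik(1)] pow_dvd_al[OF ik(2)] by simp
      then show "of_int (yb p q D i k) * (if p^i * q^k dvd j then of_nat (p^i * q^k) else 0) =
         (of_int (if i \<le> al p j \<and> k \<le> al q j then yb p q D i k * int p ^ i * int q ^ k else 0) :: complex)"
        by simp
    qed
    finally show ?thesis unfolding c_def .
qed

lemma ICG_spec: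
  fixes p q n :: nat
  assumes p: "prime p" and q: "prime q" and pq: "p \<noteq> q" and n: "n = p^2 * q^2"
    and D: "D \<subseteq> divisors_of n - {n}"
  shows "Spec (ICG_adj n D) = mset (map (\<lambda>j. of_int (Lam p q D (al p j) (al q j))) [0..<n])"
proof -
  have n0: "n > 0" using n p q prime_gt_0_nat by simp
  define c :: "nat \<Rightarrow> complex" where "c m = (if \<exists>s\<in>ICG_conn n D. s mod n = m then 1 else 0)" for m
  have adj: "ICG_adj n D = mat n n (\<lambda>(i,j). c ((j + n - i) mod n))"
    unfolding ICG_adj_def cay_adj_def c_def by simp
  have ev: "(\<Sum>m<n. c m * rt n (int j * int m)) = of_int (Lam p q D (al p j) (al q j))" if j: "j < n" for j
    using ICG_ev[OF p q pq n D j] unfolding c_def .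
  show ?thesis unfolding adj circ_spec[OF n0]
    by (rule arg_cong[where f = mset], rule map_cong[OF refl]) (use ev in simp)
qed

lemma small_dvd0: fixes a q :: int assumes "q dvd a" "\<bar>a\<bar> < q" shows "a = 0"
proof (rule ccontr)
  assume "a \<noteq> 0"
  then have "\<bar>q\<bar> \<le> \<bar>a\<bar>" using assms(1) by (rule dvd_imp_le_int)
  then show False using assms(2) by linarith
qed

lemma cop_dvd: fixes p q :: nat and a :: int assumes "prime p" "prime q" "p \<noteq> q"
  and "int q dvd int p ^ k * a" shows "int q dvd a"
proof -
  have "coprime q p" using assms(1,2,3) primes_coprime by blast
  then have "coprime (int q) (int p)" by simp
  then have "coprime (int q) (int p ^ k)" by simp
  then show ?thesis using assms(4) by (simp add: coprime_dvd_mult_right_iff)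
qed

lemma bitl: "(x::int) \<in> {0,1} \<Longrightarrow> 0 \<le> x" by auto
lemma bitu: "(x::int) \<in> {0,1} \<Longrightarrow> x \<le> 1" by auto

lemma decode:
  fixes p q :: nat and a01 a02 a10 a11 a12 a20 a21 b01 b02 b10 b11 b12 b20 b21 :: int
  assumes p: "prime p" and q: "prime q" and p3: "3 \<le> p" and pq: "p < q"
  and bits: "a01 \<in> {0,1}" "a02 \<in> {0,1}" "a10 \<in> {0,1}" "a11 \<in> {0,1}" "a12 \<in> {0,1}" "a20 \<in> {0,1}" "a21 \<in> {0,1}"
            "b01 \<in> {0,1}" "b02 \<in> {0,1}" "b10 \<in> {0,1}" "b11 \<in> {0,1}" "b12 \<in> {0,1}" "b20 \<in> {0,1}" "b21 \<in> {0,1}"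
  and h0: "int q dvd (- a10 - a01 + a11) - (- b10 - b01 + b11)"
  and h1: "int q dvd ((- a10 - a01 + a11) + (a10 - a20 - a11 + a21) * int p) - ((- b10 - b01 + b11) + (b10 - b20 - b11 + b21) * int p)"
  and h2: "int q dvd ((- a10 - a01 + a11) + (a10 - a20 - a11 + a21) * int p + (a20 - a21) * int p^2)
                   - ((- b10 - b01 + b11) + (b10 - b20 - b11 + b21) * int p + (b20 - b21) * int p^2)"
  and g1: "int p dvd ((- a10 - a01 + a11) + (a01 - a11 - a02 + a12) * int q) - ((- b10 - b01 + b11) + (b01 - b11 - b02 + b12) * int q)"
  and g2: "int p dvd ((- a10 - a01 + a11) + (a01 - a11 - a02 + a12) * int q + (a02 - a12) * int q^2)
                   - ((- b10 - b01 + b11) + (b01 - b11 - b02 + b12) * int q + (b02 - b12) * int q^2)"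
  and m: "(- a10 - a01 + a11) + (a10 - a20 - a11 + a21) * int p + (a20 - a21) * int p^2
          + (a01 - a11 - a02 + a12) * int q + (a02 - a12) * int q^2
          + (a11 - a21 - a12 + 1) * int p * int q + (a12 - 1) * int p * int q^2
          + (a21 - 1) * int p^2 * int q + int p^2 * int q^2
        = (- b10 - b01 + b11) + (b10 - b20 - b11 + b21) * int p + (b20 - b21) * int p^2
          + (b01 - b11 - b02 + b12) * int q + (b02 - b12) * int q^2
          + (b11 - b21 - b12 + 1) * int p * int q + (b12 - 1) * int p * int q^2
          + (b21 - 1) * int p^2 * int q + int p^2 * int q^2"
  shows "a01 = b01 \<and> a02 = b02 \<and> a10 = b10 \<and> a11 = b11 \<and> a12 = b12 \<and> a20 = b20 \<and> a21 = b21"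
proof -
  have pq': "p \<noteq> q" "q \<noteq> p" using pq by auto
  have P3: "int p \<ge> 3" using p3 by simp
  have "q \<noteq> 4"
  proof
    assume "q = 4"
    then have "(2::nat) dvd q" by simp
    moreover from q have "\<forall>m. m dvd q \<longrightarrow> m = 1 \<or> m = q" by (simp add: prime_nat_iff)
    ultimately have "(2::nat) = 1 \<or> 2 = q" by blast
    then show False using \<open>q = 4\<close> by simp
  qed
  then have Q5: "int q \<ge> 5" using p3 pq by simp
  note bd = bitl[OF bits(1)] bitu[OF bits(1)] bitl[OF bits(2)] bitu[OF bits(2)] bitl[OF bits(3)] bitu[OF bits(3)] bitl[OF bits(4)] bitu[OF bits(4)] bitl[OF bits(5)] bitu[OF bits(5)] bitl[OF bits(6)] bitu[OF bits(6)] bitl[OF bits(7)] bitu[OF bits(7)] bitl[OF bits(8)] bitu[OF bits(8)] bitl[OF bits(9)] bitu[OF bits(9)] bitl[OF bits(10)] bitu[OF bits(10)] bitl[OF bits(11)] bitu[OF bits(11)] bitl[OF bits(12)] bitu[OF bits(12)] bitl[OF bits(13)] bitu[OF bits(13)] bitl[OF bits(14)] bitu[OF bits(14)]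
  have e0: "(- a10 - a01 + a11) - (- b10 - b01 + b11) = 0"
    by (rule small_dvd0[OF h0]) (use bd Q5 in linarith)
  have "int q dvd int p ^ 1 * ((a10 - a20 - a11 + a21) - (b10 - b20 - b11 + b21))"
  proof -
    have "int q dvd (((- a10 - a01 + a11) + (a10 - a20 - a11 + a21) * int p) - ((- b10 - b01 + b11) + (b10 - b20 - b11 + b21) * int p))
        - ((- a10 - a01 + a11) - (- b10 - b01 + b11))" by (rule dvd_diff[OF h1 h0])
    moreover have "(((- a10 - a01 + a11) + (a10 - a20 - a11 + a21) * int p) - ((- b10 - b01 + b11) + (b10 - b20 - b11 + b21) * int p))
        - ((- a10 - a01 + a11) - (- b10 - b01 + b11)) = int p ^ 1 * ((a10 - a20 - a11 + a21) - (b10 - b20 - b11 + b21))"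
      by (simp add: algebra_simps)
    ultimately show ?thesis by simp
  qed
  then have "int q dvd ((a10 - a20 - a11 + a21) - (b10 - b20 - b11 + b21))" by (rule cop_dvd[OF p q pq'(1)])
  then have e1: "(a10 - a20 - a11 + a21) - (b10 - b20 - b11 + b21) = 0"
    by (rule small_dvd0) (use bd Q5 in linarith)
  have "int q dvd int p ^ 2 * ((a20 - a21) - (b20 - b21))"
  proof -
    have "int q dvd (((- a10 - a01 + a11) + (a10 - a20 - a11 + a21) * int p + (a20 - a21) * int p^2)
                   - ((- b10 - b01 + b11) + (b10 - b20 - b11 + b21) * int p + (b20 - b21) * int p^2))
       - (((- a10 - a01 + a11) + (a10 - a20 - a11 + a21) * int p) - ((- b10 - b01 + b11) + (b10 - b20 - b11 + b21) * int p))"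
      by (rule dvd_diff[OF h2 h1])
    moreover have "(((- a10 - a01 + a11) + (a10 - a20 - a11 + a21) * int p + (a20 - a21) * int p^2)
                   - ((- b10 - b01 + b11) + (b10 - b20 - b11 + b21) * int p + (b20 - b21) * int p^2))
       - (((- a10 - a01 + a11) + (a10 - a20 - a11 + a21) * int p) - ((- b10 - b01 + b11) + (b10 - b20 - b11 + b21) * int p))
       = int p ^ 2 * ((a20 - a21) - (b20 - b21))"
      by (simp add: algebra_simps)
    ultimately show ?thesis by simp
  qed
  then have "int q dvd ((a20 - a21) - (b20 - b21))" by (rule cop_dvd[OF p q pq'(1)])
  then have e2: "(a20 - a21) - (b20 - b21) = 0"
    by (rule small_dvd0) (use bd Q5 in linarith)
  have "int p dvd int q ^ 2 * ((a02 - a12) - (b02 - b12))"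
  proof -
    have "int p dvd (((- a10 - a01 + a11) + (a01 - a11 - a02 + a12) * int q + (a02 - a12) * int q^2)
                   - ((- b10 - b01 + b11) + (b01 - b11 - b02 + b12) * int q + (b02 - b12) * int q^2))
       - (((- a10 - a01 + a11) + (a01 - a11 - a02 + a12) * int q) - ((- b10 - b01 + b11) + (b01 - b11 - b02 + b12) * int q))"
      by (rule dvd_diff[OF g2 g1])
    moreover have "(((- a10 - a01 + a11) + (a01 - a11 - a02 + a12) * int q + (a02 - a12) * int q^2)
                   - ((- b10 - b01 + b11) + (b01 - b11 - b02 + b12) * int q + (b02 - b12) * int q^2))
       - (((- a10 - a01 + a11) + (a01 - a11 - a02 + a12) * int q) - ((- b10 - b01 + b11) + (b01 - b11 - b02 + b12) * int q))
       = int q ^ 2 * ((a02 - a12) - (b02 - b12))"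
      by (simp add: algebra_simps)
    ultimately show ?thesis by simp
  qed
  then have "int p dvd ((a02 - a12) - (b02 - b12))" by (rule cop_dvd[OF q p pq'(2)])
  then have e3: "(a02 - a12) - (b02 - b12) = 0"
    by (rule small_dvd0) (use bd P3 in linarith)
  have "int p dvd int q ^ 1 * (b11 - a11)"
  proof -
    have "((- a10 - a01 + a11) + (a01 - a11 - a02 + a12) * int q) - ((- b10 - b01 + b11) + (b01 - b11 - b02 + b12) * int q)
       = ((- a10 - a01 + a11) - (- b10 - b01 + b11)) + int q * ((a01 - a11 - a02 + a12) - (b01 - b11 - b02 + b12))"
      by (simp add: algebra_simps)
    also have "(a01 - a11 - a02 + a12) - (b01 - b11 - b02 + b12) = b11 - a11"
      using e0 e1 e2 e3 by linarith
    finally show ?thesis using g1 e0 by simp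
  qed
  then have "int p dvd (b11 - a11)" by (rule cop_dvd[OF q p pq'(2)])
  then have e4: "b11 - a11 = 0"
    by (rule small_dvd0) (use bd P3 in linarith)
  have E: "a11 = b11" "a10 = b10" "a01 = b01" "b20 = a20 - a21 + b21" "b02 = a02 - a12 + b12"
    using e0 e1 e2 e3 e4 by linarith+
  have m2: "int p * int q * ((a21 - b21) * (int p - 1) + (a12 - b12) * (int q - 1)) = 0"
  proof -
    have "int p * int q * ((a21 - b21) * (int p - 1) + (a12 - b12) * (int q - 1)) =
      ((- a10 - a01 + a11) + (a10 - a20 - a11 + a21) * int p + (a20 - a21) * int p^2
          + (a01 - a11 - a02 + a12) * int q + (a02 - a12) * int q^2
          + (a11 - a21 - a12 + 1) * int p * int q + (a12 - 1) * int p * int q^2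
          + (a21 - 1) * int p^2 * int q + int p^2 * int q^2)
      - ((- b10 - b01 + b11) + (b10 - b20 - b11 + b21) * int p + (b20 - b21) * int p^2
          + (b01 - b11 - b02 + b12) * int q + (b02 - b12) * int q^2
          + (b11 - b21 - b12 + 1) * int p * int q + (b12 - 1) * int p * int q^2
          + (b21 - 1) * int p^2 * int q + int p^2 * int q^2)"
      unfolding E by (simp add: algebra_simps power2_eq_square)
    then show ?thesis using m by simp
  qed
  have pq0: "int p * int q \<noteq> 0" using P3 Q5 by simp
  have K: "(a21 - b21) * (int p - 1) + (a12 - b12) * (int q - 1) = 0"
    using m2 pq0 by simp
  have "a21 = b21 \<and> a12 = b12"
  proof -
    have pq1: "int p - 1 < int q - 1" "0 < int p - 1" using pq P3 by auto
    show ?thesis using bits(7) bits(14) bits(5) bits(12) K pq1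
      by (auto simp: algebra_simps)
  qed
  then show ?thesis using E by (intro conjI; linarith)
qed

lemma al_zero: "al p 0 = 2" by (simp add: al_def)

lemma ICG_max:
  fixes p q n :: nat
  assumes p: "prime p" and q: "prime q" and pq: "p \<noteq> q" and n: "n = p^2 * q^2"
    and D: "D \<subseteq> divisors_of n - {n}" and j: "j < n"
  shows "Lam p q D (al p j) (al q j) \<le> Lam p q D 2 2"
proof -
  have n0: "n > 0" using n p q prime_gt_0_nat by simp
  define c :: "nat \<Rightarrow> complex" where "c m = (if \<exists>s\<in>ICG_conn n D. s mod n = m then 1 else 0)" for m
  have e1: "(\<Sum>m<n. c m * rt n (int j * int m)) = of_int (Lam p q D (al p j) (al q j))"
    using ICG_ev[OF p q pq n D j] unfolding c_def .
  have e0: "(\<Sum>m<n. c m * rt n (int 0 * int m)) = of_int (Lam p q D (al p 0) (al q 0))"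
    using ICG_ev[OF p q pq n D n0] unfolding c_def .
  have "real_of_int (Lam p q D (al p j) (al q j)) = Re (\<Sum>m<n. c m * rt n (int j * int m))"
    using e1 by simp
  also have "\<dots> = (\<Sum>m<n. Re (c m * rt n (int j * int m)))" by simp
  also have "\<dots> \<le> (\<Sum>m<n. Re (c m))"
  proof (rule sum_mono)
    fix m
    have "Re (rt n (int j * int m)) \<le> 1" unfolding rt_def by simp
    then show "Re (c m * rt n (int j * int m)) \<le> Re (c m)" by (simp add: c_def)
  qed
  also have "\<dots> = Re (\<Sum>m<n. c m * rt n (int 0 * int m))" by simp
  also have "\<dots> = real_of_int (Lam p q D 2 2)" using e0 by (simp add: al_zero)
  finally show ?thesis by simp
qed

lemma count_upt: "count (mset (map f [0..<n])) v = card {j. j < n \<and> f j = v}"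
proof (induction n)
  case 0
  then show ?case by simp
next
  case (Suc n)
  have "{j. j < Suc n \<and> f j = v} = (if f n = v then insert n {j. j < n \<and> f j = v} else {j. j < n \<and> f j = v})"
    by (auto simp: less_Suc_eq)
  then show ?case using Suc by simp
qed

lemma card_dvd: assumes "d > 0" "d dvd n" shows "card {j. j < n \<and> d dvd j} = n div d"
proof -
  obtain N where N: "n = d * N" using assms(2) by auto
  have "{j. j < n \<and> d dvd j} = (\<lambda>t. d * t) ` {..<N}"
  proof -
    have "m \<in> (\<lambda>t. d * t) ` {..<N}" if h: "m < n" "d dvd m" for m
    proof -
      obtain t where t: "m = d * t" using h(2) by (auto elim: dvdE)
      then have "d * t < d * N" using h N by simp
      then have "t < N" by simp
      then show ?thesis using t by auto
    qed
    moreover have "d * t < n" if "t < N" for t using that N assms(1) by simp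
    ultimately show ?thesis by auto
  qed
  then have "card {j. j < n \<and> d dvd j} = card ((\<lambda>t. d * t) ` {..<N})" by (simp only:)
  also have "\<dots> = card {..<N}" by (rule card_image) (use assms(1) in \<open>simp add: inj_on_def\<close>)
  finally have "card {j. j < n \<and> d dvd j} = card {..<N}" .
  then show ?thesis using N assms(1) by simp
qed

lemma al_counts:
  fixes p n :: nat
  assumes p3: "p \<ge> 3" and dv: "p^2 dvd n" and n0: "n > 0"
  defines "c \<equiv> \<lambda>A. card {j. j < n \<and> al p j = A}"
  shows "c 0 > c 1 + c 2 \<and> c 1 > c 2 \<and> c 2 > 0"
proof -
  obtain N where N: "n = p^2 * N" using dv by auto
  have N0: "N > 0" using N n0 by (cases N) auto
  have p0: "p > 0" using p3 by simp
  have pp: "p dvd p^2" by simp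
  have c2: "c 2 = N"
  proof -
    have "{j. j < n \<and> al p j = 2} = {j. j < n \<and> p^2 dvd j}" by (auto simp: al_def)
    then show ?thesis using card_dvd[of "p^2" n] dv p0 N unfolding c_def by simp
  qed
  have cp: "card {j. j < n \<and> p dvd j} = p * N"
    using card_dvd[of p n] p0 N by (simp add: power2_eq_square)
  have sub: "{j. j < n \<and> p^2 dvd j} \<subseteq> {j. j < n \<and> p dvd j}"
    using dvd_trans[OF pp] by auto
  have c1: "c 1 = p * N - N"
  proof -
    have "{j. j < n \<and> al p j = 1} = {j. j < n \<and> p dvd j} - {j. j < n \<and> p^2 dvd j}"
      by (auto simp: al_def)
    then have "c 1 = card {j. j < n \<and> p dvd j} - card {j. j < n \<and> p^2 dvd j}"
      unfolding c_def using sub by (simp add: card_Diff_subset)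
    then show ?thesis using cp card_dvd[of "p^2" n] dv p0 N by simp
  qed
  have c0: "c 0 = n - p * N"
  proof -
    have "{j. j < n \<and> al p j = 0} = {..<n} - {j. j < n \<and> p dvd j}"
      by (auto simp: al_def dvd_trans[OF pp])
    then have "c 0 = card ({..<n} - {j. j < n \<and> p dvd j})" unfolding c_def by (simp only:)
    also have "\<dots> = card {..<n} - card {j. j < n \<and> p dvd j}" by (rule card_Diff_subset) auto
    finally have "c 0 = card {..<n} - card {j. j < n \<and> p dvd j}" .
    then show ?thesis using cp by simp
  qed
  have a: "3 * (p * N) \<le> p * (p * N)" using p3 by simp
  have b: "n = p * (p * N)" using N by (simp add: power2_eq_square)
  have d: "3 * N \<le> p * N" using p3 by simp
  show ?thesis unfolding c0 c1 c2 b using a d N0 by (intro conjI; linarith)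
qed

lemma count_split:
  fixes al' :: "nat \<Rightarrow> nat" and G :: "nat \<Rightarrow> int"
  assumes "\<forall>j. al' j \<le> 2"
  shows "card {j. j < n \<and> G (al' j) = r} = (\<Sum>A<3. if G A = r then card {j. j < n \<and> al' j = A} else 0)"
proof -
  have a3: "al' j < 3" for j using assms[rule_format, of j] by linarith
  have "{j. j < n \<and> G (al' j) = r} = (\<Union>A\<in>{..<3}. {j. j < n \<and> al' j = A \<and> G A = r})"
    using a3 by auto
  then have "card {j. j < n \<and> G (al' j) = r} = (\<Sum>A<3. card {j. j < n \<and> al' j = A \<and> G A = r})"
    by (simp only:) (subst card_UN_disjoint, auto)
  also have "\<dots> = (\<Sum>A<3. if G A = r then card {j. j < n \<and> al' j = A} else 0)"
    by (intro sum.cong refl) auto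
  finally show ?thesis .
qed

lemma bool3: fixes c0 c1 c2 :: nat
  assumes "c0 > c1 + c2" "c1 > c2" "c2 > 0"
   and "(if a0 then c0 else 0) + (if a1 then c1 else 0) + (if a2 then c2 else 0)
      = (if b0 then c0 else 0) + (if b1 then c1 else 0) + (if b2 then c2 else 0)"
  shows "a0 = b0 \<and> a1 = b1 \<and> a2 = b2"
  using assms by (cases a0; cases b0; cases a1; cases b1; cases a2; cases b2) auto

lemma three_sums:
  fixes c :: "nat \<Rightarrow> nat" and f g :: "nat \<Rightarrow> int"
  assumes "c 0 > c 1 + c 2" "c 1 > c 2" "c 2 > 0"
   and eq: "\<And>r. (\<Sum>A<3. if f A = r then c A else 0) = (\<Sum>A<3. if g A = r then c A else 0)"
   and A: "A < 3"
  shows "f A = g A"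
proof -
  have "(f 0 = f A) = (g 0 = f A) \<and> (f 1 = f A) = (g 1 = f A) \<and> (f 2 = f A) = (g 2 = f A)"
    by (rule bool3[OF assms(1-3)]) (use eq[of "f A"] in \<open>simp add: sum3\<close>)
  moreover have "A = 0 \<or> A = 1 \<or> A = 2" using A by auto
  ultimately show ?thesis by auto
qed

lemma Lam_modq: assumes "A \<le> 2" "B \<le> 2"
  shows "Lam p q D A B mod int q = Lam p q D A 0 mod int q"
proof -
  have "Lam p q D A B = Lam p q D A 0 + int q *
     (\<Sum>i<3. \<Sum>k<3. if i \<le> A \<and> 1 \<le> k \<and> k \<le> B then yb p q D i k * int p ^ i * int q ^ (k - 1) else 0)"
  proof -
    have "A = 0 \<or> A = 1 \<or> A = 2" "B = 0 \<or> B = 1 \<or> B = 2" using assms by auto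
    then show ?thesis unfolding Lam_def sum3
      by (elim disjE) (simp_all add: algebra_simps power2_eq_square)
  qed
  then show ?thesis by simp
qed

lemma Lam_modp: assumes "A \<le> 2" "B \<le> 2"
  shows "Lam p q D A B mod int p = Lam p q D 0 B mod int p"
proof -
  have "Lam p q D A B = Lam p q D 0 B + int p *
     (\<Sum>i<3. \<Sum>k<3. if 1 \<le> i \<and> i \<le> A \<and> k \<le> B then yb p q D i k * int p ^ (i - 1) * int q ^ k else 0)"
  proof -
    have "A = 0 \<or> A = 1 \<or> A = 2" "B = 0 \<or> B = 1 \<or> B = 2" using assms by auto
    then show ?thesis unfolding Lam_def sum3
      by (elim disjE) (simp_all add: algebra_simps power2_eq_square)
  qed
  then show ?thesis by simp
qed

lemma Lam_explicit:
  assumes "xb p q D 0 0 = 0" "xb p q D 2 2 = 1"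
  shows "Lam p q D 0 0 = - xb p q D 1 0 - xb p q D 0 1 + xb p q D 1 1"
    and "Lam p q D 1 0 = (- xb p q D 1 0 - xb p q D 0 1 + xb p q D 1 1)
           + (xb p q D 1 0 - xb p q D 2 0 - xb p q D 1 1 + xb p q D 2 1) * int p"
    and "Lam p q D 2 0 = (- xb p q D 1 0 - xb p q D 0 1 + xb p q D 1 1)
           + (xb p q D 1 0 - xb p q D 2 0 - xb p q D 1 1 + xb p q D 2 1) * int p
           + (xb p q D 2 0 - xb p q D 2 1) * int p^2"
    and "Lam p q D 0 1 = (- xb p q D 1 0 - xb p q D 0 1 + xb p q D 1 1)
           + (xb p q D 0 1 - xb p q D 1 1 - xb p q D 0 2 + xb p q D 1 2) * int q"
    and "Lam p q D 0 2 = (- xb p q D 1 0 - xb p q D 0 1 + xb p q D 1 1)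
           + (xb p q D 0 1 - xb p q D 1 1 - xb p q D 0 2 + xb p q D 1 2) * int q
           + (xb p q D 0 2 - xb p q D 1 2) * int q^2"
    and "Lam p q D 2 2 = (- xb p q D 1 0 - xb p q D 0 1 + xb p q D 1 1)
          + (xb p q D 1 0 - xb p q D 2 0 - xb p q D 1 1 + xb p q D 2 1) * int p
          + (xb p q D 2 0 - xb p q D 2 1) * int p^2
          + (xb p q D 0 1 - xb p q D 1 1 - xb p q D 0 2 + xb p q D 1 2) * int q
          + (xb p q D 0 2 - xb p q D 1 2) * int q^2
          + (xb p q D 1 1 - xb p q D 2 1 - xb p q D 1 2 + 1) * int p * int q
          + (xb p q D 1 2 - 1) * int p * int q^2
          + (xb p q D 2 1 - 1) * int p^2 * int q + int p^2 * int q^2"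
  using assms by (simp_all add: Lam_def sum3 yb_def eval_nat_numeral algebra_simps)

lemma xb_bit: "xb p q D i k \<in> {0, 1}" by (simp add: xb_def)

lemma int_mset_from_spec:
  fixes L1 L2 :: "nat \<Rightarrow> int"
  assumes "mset (map (\<lambda>j. (of_int (L1 j) :: complex)) xs) = mset (map (\<lambda>j. of_int (L2 j)) xs)"
  shows "mset (map L1 xs) = mset (map L2 xs)"
proof -
  have e: "mset (map L xs) = image_mset (\<lambda>z. \<lfloor>Re z\<rfloor>) (mset (map (\<lambda>j. (of_int (L j) :: complex)) xs))" for L :: "nat \<Rightarrow> int"
    by (simp add: multiset.map_comp comp_def)
  show ?thesis unfolding e assms ..
qed

lemma residue_eq:
  fixes L1 L2 :: "nat \<Rightarrow> int" and Ga Gb :: "nat \<Rightarrow> int" and a :: "nat \<Rightarrow> nat" and m :: int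
  assumes M: "mset (map L1 [0..<n]) = mset (map L2 [0..<n])"
    and h1: "\<And>j. L1 j mod m = Ga (a j)" and h2: "\<And>j. L2 j mod m = Gb (a j)"
    and ale: "\<forall>j. a j \<le> 2"
    and c: "card {j. j < n \<and> a j = 0} > card {j. j < n \<and> a j = 1} + card {j. j < n \<and> a j = 2}"
           "card {j. j < n \<and> a j = 1} > card {j. j < n \<and> a j = 2}" "card {j. j < n \<and> a j = 2} > 0"
    and A: "A < 3"
  shows "Ga A = Gb A"
proof (rule three_sums[where c = "\<lambda>A. card {j. j < n \<and> a j = A}", OF c _ A])
  fix r
  have "image_mset (\<lambda>v. v mod m) (mset (map L1 [0..<n])) = image_mset (\<lambda>v. v mod m) (mset (map L2 [0..<n]))"
    using M by simp
  then have "count (mset (map (\<lambda>j. L1 j mod m) [0..<n])) r = count (mset (map (\<lambda>j. L2 j mod m) [0..<n])) r"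
    by (simp add: multiset.map_comp comp_def)
  then have "card {j. j < n \<and> Ga (a j) = r} = card {j. j < n \<and> Gb (a j) = r}"
    unfolding count_upt h1 h2 .
  then show "(\<Sum>A<3. if Ga A = r then card {j. j < n \<and> a j = A} else 0) =
             (\<Sum>A<3. if Gb A = r then card {j. j < n \<and> a j = A} else 0)"
    unfolding count_split[OF ale] .
qed

lemma xb_all_eq:
  assumes "xb p q D1 0 1 = xb p q D2 0 1 \<and> xb p q D1 0 2 = xb p q D2 0 2 \<and> xb p q D1 1 0 = xb p q D2 1 0 \<and>
     xb p q D1 1 1 = xb p q D2 1 1 \<and> xb p q D1 1 2 = xb p q D2 1 2 \<and> xb p q D1 2 0 = xb p q D2 2 0 \<and>
     xb p q D1 2 1 = xb p q D2 2 1"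
    and "xb p q D1 0 0 = xb p q D2 0 0" "xb p q D1 2 2 = xb p q D2 2 2"
    and "i \<le> 2" "k \<le> 2"
  shows "xb p q D1 i k = xb p q D2 i k"
proof -
  have "i = 0 \<or> i = 1 \<or> i = 2" "k = 0 \<or> k = 1 \<or> k = 2" using assms(4,5) by auto
  then show ?thesis using assms(1-3) by (elim disjE) auto
qed

lemma D_sub:
  fixes p q n :: nat
  assumes p: "prime p" and q: "prime q" and n: "n = p^2 * q^2"
    and D1: "D1 \<subseteq> divisors_of n - {n}"
    and X: "\<And>i k. i \<le> 2 \<Longrightarrow> k \<le> 2 \<Longrightarrow> xb p q D1 i k = xb p q D2 i k"
  shows "D1 \<subseteq> D2"
proof
  fix d assume d: "d \<in> D1"
  then have "d dvd p^2 * q^2" using D1 n by (auto simp: divisors_of_def)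
  then obtain a b where ab: "a \<le> 2" "b \<le> 2" "d = p^a * q^b" using divisors_pq[OF p q] by blast
  have "xb p q D1 (2 - a) (2 - b) = 1" using d ab by (simp add: xb_def)
  then have "xb p q D2 (2 - a) (2 - b) = 1" using X[of "2 - a" "2 - b"] by simp
  then show "d \<in> D2" using ab by (simp add: xb_def split: if_splits)
qed

theorem lemma3p27:
  fixes p q n :: nat and D1 D2 :: "nat set"
  assumes "prime p" "prime q" "3 \<le> p" "p < q"
    and "n = p^2 * q^2"
    and "D1 \<subseteq> divisors_of n - {n}" "D2 \<subseteq> divisors_of n - {n}"
    and "1 \<in> D1" "1 \<in> D2"
    and "Spec (ICG_adj n D1) = Spec (ICG_adj n D2)"
  shows "D1 = D2"
proof -
  note p = assms(1) and q = assms(2) and p3 = assms(3) and pq = assms(4) and n = assms(5)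
    and D1 = assms(6) and D2 = assms(7)
  have pq': "p \<noteq> q" using pq by simp
  have q3: "3 \<le> q" using p3 pq by simp
  have n0: "n > 0" using n p q prime_gt_0_nat by simp
  define L1 where "L1 j = Lam p q D1 (al p j) (al q j)" for j
  define L2 where "L2 j = Lam p q D2 (al p j) (al q j)" for j
  have "mset (map (\<lambda>j. (of_int (L1 j) :: complex)) [0..<n]) = mset (map (\<lambda>j. of_int (L2 j)) [0..<n])"
    using assms(10) unfolding ICG_spec[OF p q pq' n D1] ICG_spec[OF p q pq' n D2] L1_def L2_def .
  then have M: "mset (map L1 [0..<n]) = mset (map L2 [0..<n])" by (rule int_mset_from_spec)
  have dvp: "p^2 dvd n" and dvq: "q^2 dvd n" using n by auto
  note cp = al_counts[OF p3 dvp n0] and cq = al_counts[OF q3 dvq n0]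
  have ale: "\<forall>j. al p j \<le> 2" "\<forall>j. al q j \<le> 2" using al_le by auto
  have R: "Lam p q D1 A 0 mod int q = Lam p q D2 A 0 mod int q" if "A < 3" for A
    by (rule residue_eq[where Ga = "\<lambda>A. Lam p q D1 A 0 mod int q"
          and Gb = "\<lambda>A. Lam p q D2 A 0 mod int q" and m = "int q", OF M _ _ ale(1) _ _ _ that])
       (use cp in \<open>simp_all add: L1_def L2_def Lam_modq[OF al_le al_le]\<close>)
  have C: "Lam p q D1 0 B mod int p = Lam p q D2 0 B mod int p" if "B < 3" for B
    by (rule residue_eq[where Ga = "\<lambda>B. Lam p q D1 0 B mod int p"
          and Gb = "\<lambda>B. Lam p q D2 0 B mod int p" and m = "int p", OF M _ _ ale(2) _ _ _ that])
       (use cq in \<open>simp_all add: L1_def L2_def Lam_modp[OF al_le al_le]\<close>)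
  have Mx: "Lam p q D1 2 2 = Lam p q D2 2 2"
  proof -
    have mx: "Max (set (map (\<lambda>j. Lam p q D (al p j) (al q j)) [0..<n])) = Lam p q D 2 2"
      if D: "D \<subseteq> divisors_of n - {n}" for D
    proof (rule Max_eqI)
      show "finite (set (map (\<lambda>j. Lam p q D (al p j) (al q j)) [0..<n]))" by simp
      show "y \<le> Lam p q D 2 2" if "y \<in> set (map (\<lambda>j. Lam p q D (al p j) (al q j)) [0..<n])" for y
        using that ICG_max[OF p q pq' n D] by auto
      show "Lam p q D 2 2 \<in> set (map (\<lambda>j. Lam p q D (al p j) (al q j)) [0..<n])"
        using n0 by (force simp: al_zero)
    qed
    have "set (map L1 [0..<n]) = set (map L2 [0..<n])" using M by (metis set_mset_mset)
    then show ?thesis using mx[OF D1] mx[OF D2] unfolding L1_def L2_def by simp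
  qed
  have nD: "n \<notin> D1" "n \<notin> D2" using D1 D2 by auto
  have x00: "xb p q D1 0 0 = 0" "xb p q D2 0 0 = 0" using nD n by (simp_all add: xb_def)
  have x22: "xb p q D1 2 2 = 1" "xb p q D2 2 2 = 1" using assms(8,9) by (simp_all add: xb_def)
  note E1 = Lam_explicit[OF x00(1) x22(1)] and E2 = Lam_explicit[OF x00(2) x22(2)]
  have h0: "int q dvd Lam p q D1 0 0 - Lam p q D2 0 0" using R[of 0] by (simp add: mod_eq_dvd_iff)
  have h1: "int q dvd Lam p q D1 1 0 - Lam p q D2 1 0" using R[of 1] by (simp add: mod_eq_dvd_iff)
  have h2: "int q dvd Lam p q D1 2 0 - Lam p q D2 2 0" using R[of 2] by (simp add: mod_eq_dvd_iff)
  have g1: "int p dvd Lam p q D1 0 1 - Lam p q D2 0 1" using C[of 1] by (simp add: mod_eq_dvd_iff)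
  have g2: "int p dvd Lam p q D1 0 2 - Lam p q D2 0 2" using C[of 2] by (simp add: mod_eq_dvd_iff)
  have XX: "xb p q D1 0 1 = xb p q D2 0 1 \<and> xb p q D1 0 2 = xb p q D2 0 2 \<and> xb p q D1 1 0 = xb p q D2 1 0 \<and>
     xb p q D1 1 1 = xb p q D2 1 1 \<and> xb p q D1 1 2 = xb p q D2 1 2 \<and> xb p q D1 2 0 = xb p q D2 2 0 \<and>
     xb p q D1 2 1 = xb p q D2 2 1"
    by (rule decode[OF p q p3 pq xb_bit xb_bit xb_bit xb_bit xb_bit xb_bit xb_bit
          xb_bit xb_bit xb_bit xb_bit xb_bit xb_bit xb_bit
          h0[unfolded E1(1) E2(1)] h1[unfolded E1(2) E2(2)] h2[unfolded E1(3) E2(3)]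
          g1[unfolded E1(4) E2(4)] g2[unfolded E1(5) E2(5)] Mx[unfolded E1(6) E2(6)]])
  have X: "xb p q D1 i k = xb p q D2 i k" if "i \<le> 2" "k \<le> 2" for i k
    by (rule xb_all_eq[OF XX _ _ that]) (simp_all add: x00 x22)
  have "D1 \<subseteq> D2" by (rule D_sub[OF p q n D1 X])
  moreover have "D2 \<subseteq> D1" by (rule D_sub[OF p q n D2]) (use X in simp)
  ultimately show ?thesis by blast
qed

end
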